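(* Let $X$ be a finite set of cardinality $|X|$, let $x_1,\dots,x_K\in X$, and let $a_1,\dots,a_K:X\to[0,\infty)$ be functions such that $a_i(x_i)\ge a_{\min}>0$ for every $i$. Then $$\sum_{k=1}^K\frac{1}{\sum_{i\le k}a_i(x_k)}=\tilde O\!\left(\frac{|X|}{a_{\min}}\right),$$ where $\tilde O$ hides factors polylogarithmic in $K$. *)

theory Defs
  imports Complex_Main
begin

end

theory Submission
  imports Defs "HOL-Analysis.Analysis"
begin

lemma harm_bound: "(\<Sum>n=1..K. 1 / real n) \<le> 1 + ln (real K)"
proof (cases "K = 0")
  case True then show ?thesis by simp
next
  case False
  have "harm K - ln (real K) \<le> harm 1 - ln (real (1::nat))"
    using False by (intro euler_mascheroni_sequence_decreasing) auto
  moreover have "harm 1 = (1::real)" by (simp add: harm_def)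
  moreover have "harm K = (\<Sum>n=1..K. 1 / real n)"
    by (simp add: harm_def divide_inverse)
  ultimately show ?thesis by simp
qed

theorem lemma18:
  "\<exists>(C::real) (d::nat). \<forall>(X::'a set) (K::nat) (x::nat \<Rightarrow> 'a) (a::nat \<Rightarrow> 'a \<Rightarrow> real) (amin::real).
     finite X \<longrightarrow>
     (\<forall>i\<in>{1..K}. x i \<in> X) \<longrightarrow>
     (\<forall>i\<in>{1..K}. \<forall>y\<in>X. a i y \<ge> 0) \<longrightarrow>
     amin > 0 \<longrightarrow>
     (\<forall>i\<in>{1..K}. a i (x i) \<ge> amin) \<longrightarrow>
     (\<Sum>k=1..K. 1 / (\<Sum>i=1..k. a i (x k)))
        \<le> C * (real (card X) / amin) * (1 + ln (real K)) ^ d"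
proof (intro exI allI impI)
  fix X :: "'a set" and K :: nat and x :: "nat \<Rightarrow> 'a" and a :: "nat \<Rightarrow> 'a \<Rightarrow> real" and amin :: real
  assume fX: "finite X" and xX: "\<forall>i\<in>{1..K}. x i \<in> X"
    and anon: "\<forall>i\<in>{1..K}. \<forall>y\<in>X. a i y \<ge> 0" and am: "amin > 0"
    and ax: "\<forall>i\<in>{1..K}. a i (x i) \<ge> amin"
  define S where "S k = {j\<in>{1..k}. x j = x k}" for k
  define r where "r k = card (S k)" for k
  have fS: "finite (S k)" for k unfolding S_def by auto
  have rpos: "1 \<le> r k" if "k \<in> {1..K}" for k
  proof -
    have "k \<in> S k" using that unfolding S_def by auto
    then show ?thesis unfolding r_def using fS[of k] card_0_eq[of "S k"] by fastforce
  qed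
  have rle: "r k \<le> k" for k
  proof -
    have "r k \<le> card {1..k}" unfolding r_def S_def by (intro card_mono) auto
    then show ?thesis by simp
  qed
  have tm: "1 / (\<Sum>i=1..k. a i (x k)) \<le> (1/amin) * (1 / real (r k))" if k: "k \<in> {1..K}" for k
  proof -
    have "(\<Sum>i\<in>S k. a i (x k)) \<le> (\<Sum>i=1..k. a i (x k))"
      using k anon xX by (intro sum_mono2) (auto simp: S_def)
    moreover have "(\<Sum>i\<in>S k. amin) \<le> (\<Sum>i\<in>S k. a i (x k))"
      using k ax by (intro sum_mono) (auto simp: S_def, metis atLeastAtMost_iff le_trans)
    moreover have "(\<Sum>i\<in>S k. amin) = real (r k) * amin" by (simp add: r_def)
    ultimately have ge: "real (r k) * amin \<le> (\<Sum>i=1..k. a i (x k))" by linarith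
    have pos: "0 < real (r k) * amin" using rpos[OF k] am by simp
    have "1 / (\<Sum>i=1..k. a i (x k)) \<le> 1 / (real (r k) * amin)"
      using ge pos by (intro divide_left_mono) auto
    then show ?thesis by (simp add: mult.commute)
  qed
  have lt: "r k < r k'" if "k < k'" "k' \<in> {1..K}" "x k = x k'" for k k'
  proof -
    have "k' \<in> S k'" "k' \<notin> S k" unfolding S_def using that by auto
    moreover have "S k \<subseteq> S k'" unfolding S_def using that by auto
    ultimately have "S k \<subset> S k'" by blast
    then show ?thesis unfolding r_def using fS psubset_card_mono by blast
  qed
  have fib: "(\<Sum>k\<in>{k\<in>{1..K}. x k = y}. 1 / real (r k)) \<le> 1 + ln (real K)" for y
  proof -
    let ?T = "{k\<in>{1..K}. x k = y}"
    have inj: "inj_on r ?T"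
    proof (rule inj_onI)
      fix k k' assume k: "k \<in> ?T" and k': "k' \<in> ?T" and e: "r k = r k'"
      show "k = k'"
      proof (rule ccontr)
        assume "k \<noteq> k'"
        then consider "k < k'" | "k' < k" by linarith
        then show False using lt[of k k'] lt[of k' k] k k' e by cases auto
      qed
    qed
    have "(\<Sum>k\<in>?T. 1 / real (r k)) = (\<Sum>n\<in>r ` ?T. 1 / real n)"
      using sum.reindex[OF inj, of "\<lambda>n. 1 / real n"] by simp
    also have "\<dots> \<le> (\<Sum>n=1..K. 1 / real n)"
      using rpos rle by (intro sum_mono2) (auto, meson le_trans)
    also have "\<dots> \<le> 1 + ln (real K)" by (rule harm_bound)
    finally show ?thesis .
  qed
  have "(\<Sum>k=1..K. 1 / (\<Sum>i=1..k. a i (x k))) \<le> (\<Sum>k=1..K. (1/amin) * (1 / real (r k)))"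
    using tm by (intro sum_mono) auto
  also have "\<dots> = (1/amin) * (\<Sum>k=1..K. 1 / real (r k))" by (simp add: sum_distrib_left)
  also have "(\<Sum>k=1..K. 1 / real (r k)) = (\<Sum>y\<in>X. \<Sum>k\<in>{k\<in>{1..K}. x k = y}. 1 / real (r k))"
    using xX fX by (intro sum.group[symmetric]) auto
  also have "\<dots> \<le> (\<Sum>y\<in>X. 1 + ln (real K))" by (intro sum_mono fib)
  also have "\<dots> = real (card X) * (1 + ln (real K))" by simp
  finally show "(\<Sum>k=1..K. 1 / (\<Sum>i=1..k. a i (x k))) \<le> 1 * (real (card X) / amin) * (1 + ln (real K)) ^ 1"
    using am by (simp add: divide_inverse mult_ac)
qed

end
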